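(* Suppose Assumptions (C1), (C2), (C3) and (CV) hold. If $x\in\mathcal{X}$ is such that $y^*(x)$ is a single point, then $\lim_{t\to0^+}\widetilde\phi_t(x)=\phi(x)$.
   Context: Let $f,g,h_1,\dots,h_k:\mathbb{R}^n\times\mathbb{R}^m\to\mathbb{R}$ and $\mathcal{X}\subseteq\mathbb{R}^n$. For $x\in\mathcal{X}$ let $\mathcal{Y}(x)=\{y: h_i(x,y)\le 0,\ i=1,\dots,k\}$, $y^*(x)=\arg\min_{y\in\mathcal{Y}(x)} g(x,y)$, and $\phi(x)=\min_{y\in y^*(x)} f(x,y)$. For $t>0$ let $\widetilde g_t(x,y)=g(x,y)-t\sum_{i=1}^k\log(-h_i(x,y))$ (defined when all $h_i(x,y)<0$), $y_t^*(x)=\arg\min_y\widetilde g_t(x,y)$ and $\widetilde\phi_t(x)=f(x,y_t^*(x))$. Assumptions: (C1) $f$ is once and $g,h_i$ twice continuously differentiable on the relevant domain; (C2) $\mathcal{X}$ is convex and compact and for every $x\in\mathcal{X}$ there exists $y\in\mathcal{Y}(x)$ with $h_i(x,y)<0$ for all $i\in\{1,\dots,k\}$; (C3) for every $x\in\mathcal{X}$, $\mathcal{Y}(x)$ is compact and $\|y\|\le R$ for all $y\in\mathcal{Y}(x)$; (CV) for every $x$, $g(x,\cdot)$ is convex and each $h_i(x,\cdot)$ is convex, and at least one $h_i(x,\cdot)$ is strongly convex in $y$. *)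

theory Defs
  imports "HOL-Analysis.Analysis"
begin

definition C1_on :: "('a::real_normed_vector \<Rightarrow> 'b::real_normed_vector) \<Rightarrow> 'a set \<Rightarrow> bool" where
  "C1_on F S \<longleftrightarrow> (\<exists>F'. (\<forall>z\<in>S. (F has_derivative blinfun_apply (F' z)) (at z)) \<and> continuous_on S F')"

definition C2_on :: "('a::real_normed_vector \<Rightarrow> 'b::real_normed_vector) \<Rightarrow> 'a set \<Rightarrow> bool" where
  "C2_on F S \<longleftrightarrow> (\<exists>F'. (\<forall>z\<in>S. (F has_derivative blinfun_apply (F' z)) (at z)) \<and> C1_on F' S)"

definition strongly_convex_on :: "'a::real_inner set \<Rightarrow> ('a \<Rightarrow> real) \<Rightarrow> bool" where
  "strongly_convex_on S F \<longleftrightarrow> (\<exists>mu>0. \<forall>u\<in>S. \<forall>v\<in>S. \<forall>s::real. 0 \<le> s \<and> s \<le> 1 \<longrightarrow>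
      F (s *\<^sub>R u + (1 - s) *\<^sub>R v) \<le> s * F u + (1 - s) * F v - mu / 2 * s * (1 - s) * (norm (u - v))\<^sup>2)"

definition feas :: "nat \<Rightarrow> (nat \<Rightarrow> 'x \<Rightarrow> 'y \<Rightarrow> real) \<Rightarrow> 'x \<Rightarrow> 'y set" where
  "feas k h x = {y. \<forall>i\<in>{1..k}. h i x y \<le> 0}"

definition ystar :: "('x \<Rightarrow> 'y \<Rightarrow> real) \<Rightarrow> nat \<Rightarrow> (nat \<Rightarrow> 'x \<Rightarrow> 'y \<Rightarrow> real) \<Rightarrow> 'x \<Rightarrow> 'y set" where
  "ystar g k h x = {y \<in> feas k h x. \<forall>z\<in>feas k h x. g x y \<le> g x z}"

definition phi :: "('x \<Rightarrow> 'y \<Rightarrow> real) \<Rightarrow> ('x \<Rightarrow> 'y \<Rightarrow> real) \<Rightarrow> nat \<Rightarrow> (nat \<Rightarrow> 'x \<Rightarrow> 'y \<Rightarrow> real) \<Rightarrow> 'x \<Rightarrow> real" where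
  "phi f g k h x = Min (f x ` ystar g k h x)"

definition gbar :: "real \<Rightarrow> ('x \<Rightarrow> 'y \<Rightarrow> real) \<Rightarrow> nat \<Rightarrow> (nat \<Rightarrow> 'x \<Rightarrow> 'y \<Rightarrow> real) \<Rightarrow> 'x \<Rightarrow> 'y \<Rightarrow> real" where
  "gbar t g k h x y = g x y - t * (\<Sum>i=1..k. ln (- h i x y))"

definition sfeas :: "nat \<Rightarrow> (nat \<Rightarrow> 'x \<Rightarrow> 'y \<Rightarrow> real) \<Rightarrow> 'x \<Rightarrow> 'y set" where
  "sfeas k h x = {y. \<forall>i\<in>{1..k}. h i x y < 0}"

definition ytstar :: "real \<Rightarrow> ('x \<Rightarrow> 'y \<Rightarrow> real) \<Rightarrow> nat \<Rightarrow> (nat \<Rightarrow> 'x \<Rightarrow> 'y \<Rightarrow> real) \<Rightarrow> 'x \<Rightarrow> 'y" where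
  "ytstar t g k h x = (THE y. y \<in> sfeas k h x \<and> (\<forall>z\<in>sfeas k h x. gbar t g k h x y \<le> gbar t g k h x z))"

definition phit :: "real \<Rightarrow> ('x \<Rightarrow> 'y \<Rightarrow> real) \<Rightarrow> ('x \<Rightarrow> 'y \<Rightarrow> real) \<Rightarrow> nat \<Rightarrow> (nat \<Rightarrow> 'x \<Rightarrow> 'y \<Rightarrow> real) \<Rightarrow> 'x \<Rightarrow> real" where
  "phit t f g k h x = f x (ytstar t g k h x)"

end

theory Submission
  imports Defs
begin

lemma ln_avg:
  fixes a b :: real
  assumes "a > 0" "b > 0"
  shows "(ln a + ln b) / 2 \<le> ln ((a + b) / 2)"
proof -
  have "a * b \<le> ((a + b) / 2)^2"
    using sum_squares_ge_zero[of "a - b" 0] by (simp add: power2_eq_square field_simps)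
  then have "ln (a * b) \<le> ln (((a + b) / 2)^2)"
    using assms by (subst ln_le_cancel_iff) auto
  also have "\<dots> = 2 * ln ((a + b) / 2)" using assms by (subst ln_realpow) auto
  finally show ?thesis using assms by (simp add: ln_mult)
qed

lemma C1_cont:
  assumes "C1_on F UNIV" shows "continuous_on UNIV F"
proof -
  from assms obtain F' where "\<forall>z. (F has_derivative blinfun_apply (F' z)) (at z)"
    unfolding C1_on_def by auto
  then show ?thesis by (intro has_derivative_continuous_on) (auto intro: has_derivative_at_withinI)
qed

lemma C2_cont:
  assumes "C2_on F UNIV" shows "continuous_on UNIV F"
proof -
  from assms obtain F' where "\<forall>z. (F has_derivative blinfun_apply (F' z)) (at z)"
    unfolding C2_on_def by auto
  then show ?thesis by (intro has_derivative_continuous_on) (auto intro: has_derivative_at_withinI)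
qed

lemma cont_slice:
  fixes F :: "'a::topological_space \<Rightarrow> 'b::topological_space \<Rightarrow> 'c::topological_space"
  assumes "continuous_on UNIV (\<lambda>z. F (fst z) (snd z))"
  shows "continuous_on UNIV (F x)"
proof -
  have "continuous_on UNIV ((\<lambda>z. F (fst z) (snd z)) \<circ> (\<lambda>y. (x, y)))"
    by (rule continuous_on_compose) (auto intro!: continuous_intros continuous_on_subset[OF assms])
  then show ?thesis by (simp add: o_def)
qed

lemma barrier_unique:
  fixes g :: "'x \<Rightarrow> 'y::euclidean_space \<Rightarrow> real" and h :: "nat \<Rightarrow> 'x \<Rightarrow> 'y \<Rightarrow> real"
  assumes t: "t > 0"
    and cF: "compact (feas k h x)"
    and cg: "continuous_on UNIV (g x)"
    and ch: "\<forall>l\<in>{1..k}. continuous_on UNIV (h l x)"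
    and vg: "convex_on UNIV (g x)"
    and vh: "\<forall>l\<in>{1..k}. convex_on UNIV (h l x)"
    and i: "i \<in> {1..k}" "strongly_convex_on UNIV (h i x)"
    and z0: "z0 \<in> sfeas k h x"
  shows "\<exists>!y. y \<in> sfeas k h x \<and> (\<forall>z\<in>sfeas k h x. gbar t g k h x y \<le> gbar t g k h x z)"
proof (rule ex_ex1I)
  let ?S = "sfeas k h x" and ?F = "feas k h x" and ?G = "gbar t g k h x"
  have SF: "?S \<subseteq> ?F" unfolding sfeas_def feas_def by (auto intro: less_imp_le)
  have Fne: "?F \<noteq> {}" using z0 SF by auto
  obtain ym where ym: "ym \<in> ?F" "\<forall>y\<in>?F. g x ym \<le> g x y"
    using continuous_attains_inf[OF cF Fne continuous_on_subset[OF cg]] by auto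
  define gmin where "gmin = g x ym"
  have cH: "continuous_on ?F (\<lambda>y. \<Sum>l=1..k. \<bar>h l x y\<bar>)"
    using ch by (intro continuous_on_sum continuous_intros) (meson atLeastAtMost_iff continuous_on_subset subset_UNIV)
  obtain yM where yM: "yM \<in> ?F" "\<forall>y\<in>?F. (\<Sum>l=1..k. \<bar>h l x y\<bar>) \<le> (\<Sum>l=1..k. \<bar>h l x yM\<bar>)"
    using continuous_attains_sup[OF cF Fne cH] by auto
  define M where "M = max 1 (\<Sum>l=1..k. \<bar>h l x yM\<bar>)"
  have hM: "- h l x y \<le> M" if "y \<in> ?F" "l \<in> {1..k}" for y l
  proof -
    have "- h l x y \<le> \<bar>h l x y\<bar>" by simp
    also have "\<dots> \<le> (\<Sum>l=1..k. \<bar>h l x y\<bar>)"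
      using that(2) by (intro member_le_sum) auto
    also have "\<dots> \<le> M" using yM that(1) unfolding M_def by force
    finally show ?thesis .
  qed
  have lnM: "ln M \<ge> 0" unfolding M_def by simp
  define c where "c = ?G z0"
  define \<delta> where "\<delta> = exp ((gmin - c) / t - real k * ln M - 1)"
  have dpos: "\<delta> > 0" unfolding \<delta>_def by simp
  have key: "?G y > c" if y: "y \<in> ?S" and j: "j \<in> {1..k}" and hj: "- h j x y < \<delta>" for y j
  proof -
    have yF: "y \<in> ?F" using y SF by auto
    have hneg: "\<forall>l\<in>{1..k}. h l x y < 0" using y unfolding sfeas_def by auto
    have "ln (- h j x y) < ln \<delta>" using hj hneg j dpos by (subst ln_less_cancel_iff) auto
    also have "\<dots> = (gmin - c) / t - real k * ln M - 1" unfolding \<delta>_def by simp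
    finally have l1: "ln (- h j x y) < (gmin - c) / t - real k * ln M - 1" .
    have "(\<Sum>l\<in>{1..k} - {j}. ln (- h l x y)) \<le> real (card ({1..k} - {j})) * ln M"
    proof (rule sum_bounded_above)
      fix l assume l: "l \<in> {1..k} - {j}"
      then have "0 < - h l x y" "- h l x y \<le> M" using hneg hM[OF yF] by auto
      then show "ln (- h l x y) \<le> ln M" by (subst ln_le_cancel_iff) auto
    qed
    also have "\<dots> \<le> real k * ln M"
    proof -
      have "card ({1..k} - {j}) \<le> k" using card_Diff1_le[of "{1..k}" j] by simp
      then show ?thesis using lnM by (intro mult_right_mono) auto
    qed
    finally have l2: "(\<Sum>l\<in>{1..k} - {j}. ln (- h l x y)) \<le> real k * ln M" .
    have "(\<Sum>l=1..k. ln (- h l x y)) = ln (- h j x y) + (\<Sum>l\<in>{1..k} - {j}. ln (- h l x y))"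
      using j by (subst sum.remove[of _ j]) auto
    also have "\<dots> < (gmin - c) / t - 1" using l1 l2 by linarith
    finally have "t * (\<Sum>l=1..k. ln (- h l x y)) < t * ((gmin - c) / t - 1)"
      using t by (intro mult_strict_left_mono) auto
    also have "\<dots> = gmin - c - t" using t by (simp add: field_simps)
    finally have "t * (\<Sum>l=1..k. ln (- h l x y)) < gmin - c - t" .
    moreover have "gmin \<le> g x y" using ym yF unfolding gmin_def by auto
    ultimately show ?thesis using t unfolding gbar_def by linarith
  qed
  define L where "L = {y \<in> ?F. \<forall>l\<in>{1..k}. h l x y \<le> - \<delta>}"
  have LS: "L \<subseteq> ?S" using dpos unfolding L_def sfeas_def by force
  have z0L: "z0 \<in> L"
  proof (rule ccontr)
    assume "z0 \<notin> L"
    then obtain j where "j \<in> {1..k}" "- h j x z0 < \<delta>" using z0 SF unfolding L_def by force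
    from key[OF z0 this] show False unfolding c_def by simp
  qed
  have "L = ?F \<inter> (\<Inter>l\<in>{1..k}. {y. h l x y \<le> - \<delta>})" unfolding L_def by auto
  moreover have "closed (\<Inter>l\<in>{1..k}. {y. h l x y \<le> - \<delta>})"
    using ch by (intro closed_INT ballI closed_Collect_le) auto
  ultimately have cL: "compact L" using cF by (simp add: compact_Int_closed)
  have cs: "continuous_on L (\<lambda>y. \<Sum>l=1..k. ln (- h l x y))"
  proof (rule continuous_on_sum)
    fix l assume l: "l \<in> {1..k}"
    have c1: "continuous_on L (h l x)"
      by (rule continuous_on_subset[OF ch[rule_format, OF l]]) simp
    have nz: "\<forall>y\<in>L. - h l x y \<noteq> 0" using l dpos unfolding L_def by force
    show "continuous_on L (\<lambda>y. ln (- h l x y))"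
      by (rule continuous_on_ln[OF continuous_on_minus[OF c1] nz])
  qed
  have contL: "continuous_on L ?G"
    unfolding gbar_def
    by (rule continuous_on_diff[OF continuous_on_subset[OF cg subset_UNIV] continuous_on_mult_left[OF cs]])
  obtain ys where ys: "ys \<in> L" "\<forall>y\<in>L. ?G ys \<le> ?G y"
    using continuous_attains_inf[OF cL _ contL] z0L by auto
  show "\<exists>y. y \<in> ?S \<and> (\<forall>z\<in>?S. ?G y \<le> ?G z)"
  proof (intro exI conjI ballI)
    show "ys \<in> ?S" using ys LS by auto
    fix z assume z: "z \<in> ?S"
    show "?G ys \<le> ?G z"
    proof (cases "z \<in> L")
      case True then show ?thesis using ys by auto
    next
      case False
      then obtain j where "j \<in> {1..k}" "- h j x z < \<delta>" using z SF unfolding L_def by force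
      from key[OF z this] have "?G z > c" .
      moreover have "?G ys \<le> c" using ys z0L unfolding c_def by auto
      ultimately show ?thesis by simp
    qed
  qed
next
  let ?S = "sfeas k h x" and ?G = "gbar t g k h x"
  fix y1 y2
  assume 1: "y1 \<in> ?S \<and> (\<forall>z\<in>?S. ?G y1 \<le> ?G z)" and 2: "y2 \<in> ?S \<and> (\<forall>z\<in>?S. ?G y2 \<le> ?G z)"
  show "y1 = y2"
  proof (rule ccontr)
    assume ne: "y1 \<noteq> y2"
    define m where "m = (1 - 1/2) *\<^sub>R y1 + (1/2::real) *\<^sub>R y2"
    have h1: "\<forall>l\<in>{1..k}. h l x y1 < 0" and h2: "\<forall>l\<in>{1..k}. h l x y2 < 0"
      using 1 2 unfolding sfeas_def by auto
    have hm: "h l x m \<le> (h l x y1 + h l x y2) / 2" if "l \<in> {1..k}" for l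
      using convex_onD[OF vh[rule_format, OF that], of "1/2" y1 y2] unfolding m_def by simp
    obtain mu where mu: "mu > 0" and sc: "\<forall>u v. \<forall>s::real. 0 \<le> s \<and> s \<le> 1 \<longrightarrow>
      h i x (s *\<^sub>R u + (1 - s) *\<^sub>R v) \<le> s * h i x u + (1 - s) * h i x v - mu / 2 * s * (1 - s) * (norm (u - v))\<^sup>2"
      using i(2) unfolding strongly_convex_on_def by auto
    have "h i x m \<le> (h i x y1 + h i x y2) / 2 - mu / 8 * (norm (y1 - y2))\<^sup>2"
      using sc[rule_format, of "1/2" y1 y2] unfolding m_def by (simp add: add_divide_distrib)
    moreover have "mu / 8 * (norm (y1 - y2))\<^sup>2 > 0" using mu ne by simp
    ultimately have hmi: "h i x m < (h i x y1 + h i x y2) / 2" by linarith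
    have mS: "m \<in> ?S" unfolding sfeas_def
    proof (intro CollectI ballI)
      fix l assume l: "l \<in> {1..k}"
      show "h l x m < 0" using hm[OF l] h1[rule_format, OF l] h2[rule_format, OF l] by (simp add: field_simps)
    qed
    have lnle: "(ln (- h l x y1) + ln (- h l x y2)) / 2 \<le> ln (- h l x m)" if l: "l \<in> {1..k}" for l
    proof -
      have "(ln (- h l x y1) + ln (- h l x y2)) / 2 \<le> ln ((- h l x y1 + - h l x y2) / 2)"
        using h1 h2 l by (intro ln_avg) auto
      also have "\<dots> \<le> ln (- h l x m)"
        using hm[OF l] h1[rule_format, OF l] h2[rule_format, OF l] by (subst ln_le_cancel_iff) (simp_all add: field_simps)
      finally show ?thesis .
    qed
    have lnlt: "(ln (- h i x y1) + ln (- h i x y2)) / 2 < ln (- h i x m)"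
    proof -
      have "(ln (- h i x y1) + ln (- h i x y2)) / 2 \<le> ln ((- h i x y1 + - h i x y2) / 2)"
        using h1 h2 i by (intro ln_avg) auto
      also have "\<dots> < ln (- h i x m)"
        using hmi h1[rule_format, OF i(1)] h2[rule_format, OF i(1)] by (subst ln_less_cancel_iff) (simp_all add: field_simps)
      finally show ?thesis .
    qed
    have "(\<Sum>l=1..k. (ln (- h l x y1) + ln (- h l x y2)) / 2) < (\<Sum>l=1..k. ln (- h l x m))"
      using lnle lnlt i by (intro sum_strict_mono_ex1) auto
    then have sl: "((\<Sum>l=1..k. ln (- h l x y1)) + (\<Sum>l=1..k. ln (- h l x y2))) / 2 < (\<Sum>l=1..k. ln (- h l x m))"
      by (simp only: sum.distrib flip: sum_divide_distrib)
    have gm: "g x m \<le> (g x y1 + g x y2) / 2"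
      using convex_onD[OF vg, of "1/2" y1 y2] unfolding m_def by simp
    have "?G m < (?G y1 + ?G y2) / 2"
      unfolding gbar_def using gm mult_strict_left_mono[OF sl t] by (simp add: field_simps)
    moreover have "?G y1 \<le> ?G m" "?G y1 \<le> ?G y2" "?G y2 \<le> ?G y1" using 1 2 mS by auto
    ultimately show False by (simp add: field_simps)
  qed
qed


theorem theorem11:
  fixes f g :: "real^'n \<Rightarrow> real^'m \<Rightarrow> real"
    and h :: "nat \<Rightarrow> real^'n \<Rightarrow> real^'m \<Rightarrow> real"
    and k :: nat and X :: "(real^'n) set" and R :: real and x :: "real^'n"
  assumes C1_f: "C1_on (\<lambda>z. f (fst z) (snd z)) UNIV"
    and C1_g: "C2_on (\<lambda>z. g (fst z) (snd z)) UNIV"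
    and C1_h: "\<forall>i\<in>{1..k}. C2_on (\<lambda>z. h i (fst z) (snd z)) UNIV"
    and C2_convex: "convex X" and C2_compact: "compact X"
    and C2_slater: "\<forall>x\<in>X. \<exists>y\<in>feas k h x. \<forall>i\<in>{1..k}. h i x y < 0"
    and C3_compact: "\<forall>x\<in>X. compact (feas k h x)"
    and C3_bound: "\<forall>x\<in>X. \<forall>y\<in>feas k h x. norm y \<le> R"
    and CV_g: "\<forall>x. convex_on UNIV (g x)"
    and CV_h: "\<forall>x. \<forall>i\<in>{1..k}. convex_on UNIV (h i x)"
    and CV_strong: "\<forall>x. \<exists>i\<in>{1..k}. strongly_convex_on UNIV (h i x)"
    and x_in: "x \<in> X"
    and single: "\<exists>y0. ystar g k h x = {y0}"
  shows "((\<lambda>t. phit t f g k h x) \<longlongrightarrow> phi f g k h x) (at_right 0)"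
proof -
  let ?F = "feas k h x" and ?S = "sfeas k h x"
  have cg: "continuous_on UNIV (g x)" by (rule cont_slice[OF C2_cont[OF C1_g]])
  have cf: "continuous_on UNIV (f x)" by (rule cont_slice[OF C1_cont[OF C1_f]])
  have ch: "\<forall>l\<in>{1..k}. continuous_on UNIV (h l x)"
  proof
    fix l assume l: "l \<in> {1..k}"
    show "continuous_on UNIV (h l x)" by (rule cont_slice[OF C2_cont[OF C1_h[rule_format, OF l]]])
  qed
  have SF: "?S \<subseteq> ?F" unfolding sfeas_def feas_def by (auto intro: less_imp_le)
  obtain i where i: "i \<in> {1..k}" "strongly_convex_on UNIV (h i x)" using CV_strong by blast
  obtain z0 where z0F: "z0 \<in> ?F" and z0neg: "\<forall>l\<in>{1..k}. h l x z0 < 0"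
    using C2_slater x_in by blast
  have z0: "z0 \<in> ?S" using z0neg unfolding sfeas_def by simp
  have cF: "compact ?F" using C3_compact x_in by blast
  obtain y0 where y0: "ystar g k h x = {y0}" using single by blast
  have y0F: "y0 \<in> ?F" and y0min: "\<forall>z\<in>?F. g x y0 \<le> g x z"
    using y0 unfolding ystar_def by auto
  have yuniq: "y = y0" if "y \<in> ?F" "\<forall>z\<in>?F. g x y \<le> g x z" for y
  proof -
    have "y \<in> ystar g k h x" unfolding ystar_def using that by simp
    then show ?thesis using y0 by simp
  qed
  define yt where "yt t = ytstar t g k h x" for t
  have ytP: "yt t \<in> ?S \<and> (\<forall>z\<in>?S. gbar t g k h x (yt t) \<le> gbar t g k h x z)" if t: "t > 0" for t
  proof -
    have "\<exists>!y. y \<in> ?S \<and> (\<forall>z\<in>?S. gbar t g k h x y \<le> gbar t g k h x z)"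
      by (rule barrier_unique[of t k h x g i z0, OF t cF cg ch CV_g[rule_format, of x] CV_h[THEN spec, of x] i z0])
    from theI'[OF this] show ?thesis unfolding yt_def ytstar_def .
  qed
  have Fne: "?F \<noteq> {}" using z0F by auto
  have cH: "continuous_on ?F (\<lambda>y. \<Sum>l=1..k. \<bar>h l x y\<bar>)"
  proof (rule continuous_on_sum)
    fix l assume l: "l \<in> {1..k}"
    have c1: "continuous_on ?F (h l x)"
      by (rule continuous_on_subset[OF ch[rule_format, OF l]]) simp
    show "continuous_on ?F (\<lambda>y. \<bar>h l x y\<bar>)" by (rule continuous_on_rabs[OF c1])
  qed
  obtain yM where yM: "yM \<in> ?F" "\<forall>y\<in>?F. (\<Sum>l=1..k. \<bar>h l x y\<bar>) \<le> (\<Sum>l=1..k. \<bar>h l x yM\<bar>)"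
    using continuous_attains_sup[OF cF Fne cH] by auto
  define M where "M = max 1 (\<Sum>l=1..k. \<bar>h l x yM\<bar>)"
  have hM: "- h l x y \<le> M" if "y \<in> ?F" "l \<in> {1..k}" for y l
  proof -
    have "- h l x y \<le> \<bar>h l x y\<bar>" by simp
    also have "\<dots> \<le> (\<Sum>l=1..k. \<bar>h l x y\<bar>)"
      using that(2) by (intro member_le_sum) auto
    also have "\<dots> \<le> (\<Sum>l=1..k. \<bar>h l x yM\<bar>)" using yM that(1) by blast
    also have "\<dots> \<le> M" unfolding M_def by simp
    finally show ?thesis .
  qed
  have sumbound: "(\<Sum>l=1..k. ln (- h l x y)) \<le> real k * ln M" if y: "y \<in> ?S" for y
  proof -
    have yF: "y \<in> ?F" using y SF by blast
    have "(\<Sum>l=1..k. ln (- h l x y)) \<le> real (card {1..k}) * ln M"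
    proof (rule sum_bounded_above)
      fix l assume l: "l \<in> {1..k}"
      have "0 < - h l x y" using y l unfolding sfeas_def by simp
      moreover have "- h l x y \<le> M" by (rule hM[OF yF l])
      ultimately show "ln (- h l x y) \<le> ln M" by (subst ln_le_cancel_iff) auto
    qed
    then show ?thesis by simp
  qed
  have lim: "(yt \<longlongrightarrow> y0) (at_right 0)"
    unfolding tendsto_iff
  proof (intro allI impI)
    fix e :: real assume e: "e > 0"
    define K where "K = ?F - ball y0 e"
    show "\<forall>\<^sub>F t in at_right 0. dist (yt t) y0 < e"
    proof (cases "K = {}")
      case True
      show ?thesis using eventually_at_right_less[of "0::real"]
      proof (rule eventually_mono)
        fix t :: real assume "0 < t"
        then have "yt t \<in> ?F" using ytP SF by blast
        then have "yt t \<in> ball y0 e" using True unfolding K_def by blast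
        then show "dist (yt t) y0 < e" by (simp add: dist_commute)
      qed
    next
      case False
      have cK: "compact K" unfolding K_def by (rule compact_diff[OF cF open_ball])
      obtain yK where yK: "yK \<in> K" "\<forall>y\<in>K. g x yK \<le> g x y"
        using continuous_attains_inf[OF cK False continuous_on_subset[OF cg subset_UNIV]] by blast
      define \<eta> where "\<eta> = g x yK - g x y0"
      have eta: "\<eta> > 0"
      proof (rule ccontr)
        assume "\<not> \<eta> > 0"
        then have "g x yK \<le> g x y0" unfolding \<eta>_def by simp
        then have "\<forall>z\<in>?F. g x yK \<le> g x z" using y0min by (meson order_trans)
        moreover have "yK \<in> ?F" using yK unfolding K_def by blast
        ultimately have "yK = y0" using yuniq by blast
        then show False using yK e unfolding K_def by simp
      qed
      define w where "w s = (1 - s) *\<^sub>R y0 + s *\<^sub>R z0" for s :: real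
      have w0: "w 0 = y0" unfolding w_def by simp
      have cw: "isCont w 0" unfolding w_def by (intro continuous_intros)
      have cgw: "isCont (g x) (w 0)"
        using cg by (simp add: continuous_on_eq_continuous_at)
      have "isCont (\<lambda>s. g x (w s)) 0" by (rule isCont_o2[OF cw cgw])
      then obtain d where d: "d > 0" "\<forall>s. dist s 0 < d \<longrightarrow> dist (g x (w s)) (g x (w 0)) < \<eta> / 2"
        unfolding continuous_at_eps_delta using eta by (meson half_gt_zero)
      define s where "s = min (d / 2) 1"
      have s: "0 < s" "s \<le> 1" "dist s 0 < d" using d(1) unfolding s_def by auto
      define z where "z = w s"
      have ga: "dist (g x (w s)) (g x y0) < \<eta> / 2"
        using d(2)[rule_format, OF s(3)] w0 by simp
      have gz: "g x z < g x y0 + \<eta> / 2"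
      proof -
        have "g x (w s) - g x y0 < \<eta> / 2" using ga unfolding dist_real_def abs_less_iff by blast
        then show ?thesis unfolding z_def by linarith
      qed
      have zS: "z \<in> ?S" unfolding sfeas_def
      proof (intro CollectI ballI)
        fix l assume l: "l \<in> {1..k}"
        have "h l x z \<le> (1 - s) * h l x y0 + s * h l x z0"
          unfolding z_def w_def
          using convex_onD[OF CV_h[THEN spec, of x, rule_format, OF l], of s y0 z0] s by simp
        moreover have "(1 - s) * h l x y0 \<le> 0"
          using y0F l s unfolding feas_def by (intro mult_nonneg_nonpos) auto
        moreover have "s * h l x z0 < 0" using z0neg l s by (intro mult_pos_neg) auto
        ultimately show "h l x z < 0" by simp
      qed
      define Sz where "Sz = (\<Sum>l=1..k. ln (- h l x z))"
      define C where "C = \<bar>real k * ln M - Sz\<bar> + 1"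
      have Cpos: "C > 0" unfolding C_def by simp
      have "\<forall>\<^sub>F t in at_right 0. t \<in> {0<..<\<eta> / (2 * C)}"
        using eta Cpos by (intro eventually_at_right_real) simp
      then show ?thesis
      proof (rule eventually_mono)
        fix t :: real assume "t \<in> {0<..<\<eta> / (2 * C)}"
        then have t: "0 < t" "t < \<eta> / (2 * C)" by auto
        have tC: "t * C < \<eta> / 2" using t Cpos by (simp add: field_simps)
        define y where "y = yt t"
        have yS: "y \<in> ?S" and ymin: "gbar t g k h x y \<le> gbar t g k h x z"
          using ytP[OF t(1)] zS unfolding y_def by auto
        have yF: "y \<in> ?F" using yS SF by blast
        have sb: "t * (\<Sum>l=1..k. ln (- h l x y)) \<le> t * (real k * ln M)"
          using sumbound[OF yS] t by (intro mult_left_mono) auto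
        have "t * (real k * ln M - Sz) \<le> t * C"
          using t unfolding C_def by (intro mult_left_mono) auto
        then have "g x y \<le> g x z + t * C"
          using ymin sb unfolding gbar_def Sz_def by (simp add: algebra_simps)
        then have "g x y < g x y0 + \<eta>" using gz tC by linarith
        then have gy: "g x y < g x yK" unfolding \<eta>_def by simp
        show "dist (yt t) y0 < e"
        proof (rule ccontr)
          assume "\<not> dist (yt t) y0 < e"
          then have "y \<in> K" using yF unfolding K_def y_def by (simp add: dist_commute)
          then show False using yK gy by force
        qed
      qed
    qed
  qed
  have cfy: "isCont (f x) y0" using cf by (simp add: continuous_on_eq_continuous_at)
  have "((\<lambda>t. f x (yt t)) \<longlongrightarrow> f x y0) (at_right 0)"
    by (rule isCont_tendsto_compose[OF cfy lim])
  moreover have "phi f g k h x = f x y0" unfolding phi_def y0 by simp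
  ultimately show ?thesis unfolding phit_def yt_def by simp
qed

end
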